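(* Let $(A,\mu_A,\alpha_A)$ and $(B,\mu_B,\alpha_B)$ be Hom-associative algebras and $R:B\otimes A\to A\otimes B$ a Hom-twisting map, written $R(b\otimes a)=a_R\otimes b_R$. Define $T:(A\otimes B)\otimes(A\otimes B)\to(A\otimes B)\otimes(A\otimes B)$ by $T((a\otimes b)\otimes(a'\otimes b'))=(a\otimes b_R)\otimes(a'_R\otimes b')$. Then $T$ is a Hom-twistor for the tensor product Hom-associative algebra $(A\otimes B,\mu_{A\otimes B},\alpha_A\otimes\alpha_B)$. Consequently $A\otimes_R B:=(A\otimes B)^T$, with multiplication $(a\otimes b)(a'\otimes b')=aa'_R\otimes b_Rb'$ and structure map $\alpha_A\otimes\alpha_B$, is a Hom-associative algebra.
   Context: Algebras over a field $k$, not assumed unital. A Hom-associative algebra is $(A,\mu,\alpha)$ with $\mu(a\otimes a')=aa'$, $\alpha(aa')=\alpha(a)\alpha(a')$, $\alpha(a)(a'a'')=(aa')\alpha(a'')$. The tensor product of Hom-associative algebras $A,B$ is $A\otimes B$ with $(a\otimes b)(a'\otimes b')=aa'\otimes bb'$ and structure map $\alpha_A\otimes\alpha_B$. A Hom-twisting map between $A$ and $B$ is a linear $R:B\otimes A\to A\otimes B$ with $(\alpha_A\otimes\alpha_B)\circ R=R\circ(\alpha_B\otimes\alpha_A)$, $R\circ(\alpha_B\otimes\mu_A)=(\mu_A\otimes\alpha_B)\circ(\mathrm{id}_A\otimes R)\circ(R\otimes\mathrm{id}_A)$, $R\circ(\mu_B\otimes\alpha_A)=(\alpha_A\otimes\mu_B)\circ(R\otimes\mathrm{id}_B)\circ(\mathrm{id}_B\otimes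 R)$. For a Hom-associative algebra $(D,\mu,\alpha)$ and linear $T:D\otimes D\to D\otimes D$ written $T(d\otimes d')=d^T\otimes d'_T$, let $T_{12}=T\otimes\mathrm{id}$, $T_{23}=\mathrm{id}\otimes T$, $T_{13}(d\otimes d'\otimes d'')=d^T\otimes d'\otimes d''_T$; $T$ is a Hom-twistor if $(\alpha\otimes\alpha)\circ T=T\circ(\alpha\otimes\alpha)$, $T\circ(\alpha\otimes\mu)=(\alpha\otimes\mu)\circ T_{13}\circ T_{12}$, $T\circ(\mu\otimes\alpha)=(\mu\otimes\alpha)\circ T_{13}\circ T_{23}$, $T_{12}\circ T_{23}=T_{23}\circ T_{12}$; and $D^T$ denotes $(D,\mu\circ T,\alpha)$. *)

theory Defs
  imports "HOL-Library.Poly_Mapping"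
begin

(* Vector spaces over a field 'k are modelled as free vector spaces: the space with
basis I (a subset of a type 'i) is the set of finitely supported functions
'i \<Rightarrow>0 'k whose support lies in I.  The tensor product of the spaces with
bases I and J is the space with basis I \<times> J, elementary tensors being
x \<otimes> y = (\<lambda>(i,j). x i * y j). *)

definition fvs :: "'i set \<Rightarrow> ('i \<Rightarrow>\<^sub>0 'k::field) set" where
  "fvs I = {x. Poly_Mapping.keys x \<subseteq> I}"

definition smult :: "'k::field \<Rightarrow> ('i \<Rightarrow>\<^sub>0 'k) \<Rightarrow> ('i \<Rightarrow>\<^sub>0 'k)" where
  "smult c x = Poly_Mapping.map (\<lambda>v. c * v) x"

definition is_lin :: "'i set \<Rightarrow> 'j set \<Rightarrow> (('i \<Rightarrow>\<^sub>0 'k::field) \<Rightarrow> ('j \<Rightarrow>\<^sub>0 'k)) \<Rightarrow> bool" where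
  "is_lin I J f \<longleftrightarrow> (\<forall>x\<in>fvs I. f x \<in> fvs J)
     \<and> (\<forall>x\<in>fvs I. \<forall>y\<in>fvs I. f (x + y) = f x + f y)
     \<and> (\<forall>c. \<forall>x\<in>fvs I. f (smult c x) = smult c (f x))"

definition tensor :: "('i \<Rightarrow>\<^sub>0 'k::field) \<Rightarrow> ('j \<Rightarrow>\<^sub>0 'k) \<Rightarrow> ('i \<times> 'j \<Rightarrow>\<^sub>0 'k)" where
  "tensor x y = Abs_poly_mapping (\<lambda>(i, j). Poly_Mapping.lookup x i * Poly_Mapping.lookup y j)"

definition lext :: "('i \<Rightarrow> ('j \<Rightarrow>\<^sub>0 'k::field)) \<Rightarrow> ('i \<Rightarrow>\<^sub>0 'k) \<Rightarrow> ('j \<Rightarrow>\<^sub>0 'k)" where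
  "lext g z = (\<Sum>i\<in>Poly_Mapping.keys z. smult (Poly_Mapping.lookup z i) (g i))"

definition tmap :: "(('i \<Rightarrow>\<^sub>0 'k::field) \<Rightarrow> ('i2 \<Rightarrow>\<^sub>0 'k)) \<Rightarrow> (('j \<Rightarrow>\<^sub>0 'k) \<Rightarrow> ('j2 \<Rightarrow>\<^sub>0 'k))
     \<Rightarrow> ('i \<times> 'j \<Rightarrow>\<^sub>0 'k) \<Rightarrow> ('i2 \<times> 'j2 \<Rightarrow>\<^sub>0 'k)" where
  "tmap f g = lext (\<lambda>(i, j). tensor (f (Poly_Mapping.single i 1)) (g (Poly_Mapping.single j 1)))"

definition assocl :: "('a \<times> ('b \<times> 'c) \<Rightarrow>\<^sub>0 'k::field) \<Rightarrow> (('a \<times> 'b) \<times> 'c \<Rightarrow>\<^sub>0 'k)" where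
  "assocl = lext (\<lambda>(a, (b, c)). Poly_Mapping.single ((a, b), c) 1)"

definition assocr :: "(('a \<times> 'b) \<times> 'c \<Rightarrow>\<^sub>0 'k::field) \<Rightarrow> ('a \<times> ('b \<times> 'c) \<Rightarrow>\<^sub>0 'k)" where
  "assocr = lext (\<lambda>((a, b), c). Poly_Mapping.single (a, (b, c)) 1)"

(* Hom-associative algebra (A, mu, alpha) with A the space with basis I,
mu : A \<otimes> A \<rightarrow> A linear, and a a' := mu (a \<otimes> a'). *)
definition hom_assoc :: "'i set \<Rightarrow> (('i \<times> 'i \<Rightarrow>\<^sub>0 'k::field) \<Rightarrow> ('i \<Rightarrow>\<^sub>0 'k))
    \<Rightarrow> (('i \<Rightarrow>\<^sub>0 'k) \<Rightarrow> ('i \<Rightarrow>\<^sub>0 'k)) \<Rightarrow> bool" where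
  "hom_assoc I mu alpha \<longleftrightarrow> is_lin (I \<times> I) I mu \<and> is_lin I I alpha
     \<and> (\<forall>a\<in>fvs I. \<forall>a'\<in>fvs I. alpha (mu (tensor a a')) = mu (tensor (alpha a) (alpha a')))
     \<and> (\<forall>a\<in>fvs I. \<forall>a'\<in>fvs I. \<forall>a''\<in>fvs I.
          mu (tensor (alpha a) (mu (tensor a' a''))) = mu (tensor (mu (tensor a a')) (alpha a'')))"

(* Multiplication of the tensor product algebra:
(mu_A \<otimes> mu_B) \<circ> (id \<otimes> flip \<otimes> id). *)
definition mid_swap :: "(('i \<times> 'j) \<times> ('i \<times> 'j) \<Rightarrow>\<^sub>0 'k::field) \<Rightarrow> (('i \<times> 'i) \<times> ('j \<times> 'j) \<Rightarrow>\<^sub>0 'k)" where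
  "mid_swap = lext (\<lambda>((i, j), (i', j')). Poly_Mapping.single ((i, i'), (j, j')) 1)"

definition tensor_mult ::
  "(('i \<times> 'i \<Rightarrow>\<^sub>0 'k::field) \<Rightarrow> ('i \<Rightarrow>\<^sub>0 'k)) \<Rightarrow> (('j \<times> 'j \<Rightarrow>\<^sub>0 'k) \<Rightarrow> ('j \<Rightarrow>\<^sub>0 'k))
    \<Rightarrow> (('i \<times> 'j) \<times> ('i \<times> 'j) \<Rightarrow>\<^sub>0 'k) \<Rightarrow> ('i \<times> 'j \<Rightarrow>\<^sub>0 'k)" where
  "tensor_mult muA muB = tmap muA muB \<circ> mid_swap"

(* Hom-twisting map R : B \<otimes> A \<rightarrow> A \<otimes> B (A with basis I, B with basis J).
Triple tensors are identified via the canonical associativity isomorphisms. *)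
definition hom_twisting :: "'i set \<Rightarrow> 'j set
    \<Rightarrow> (('i \<times> 'i \<Rightarrow>\<^sub>0 'k::field) \<Rightarrow> ('i \<Rightarrow>\<^sub>0 'k)) \<Rightarrow> (('i \<Rightarrow>\<^sub>0 'k) \<Rightarrow> ('i \<Rightarrow>\<^sub>0 'k))
    \<Rightarrow> (('j \<times> 'j \<Rightarrow>\<^sub>0 'k) \<Rightarrow> ('j \<Rightarrow>\<^sub>0 'k)) \<Rightarrow> (('j \<Rightarrow>\<^sub>0 'k) \<Rightarrow> ('j \<Rightarrow>\<^sub>0 'k))
    \<Rightarrow> (('j \<times> 'i \<Rightarrow>\<^sub>0 'k) \<Rightarrow> ('i \<times> 'j \<Rightarrow>\<^sub>0 'k)) \<Rightarrow> bool" where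
  "hom_twisting I J muA alphaA muB alphaB R \<longleftrightarrow> is_lin (J \<times> I) (I \<times> J) R
     \<and> (\<forall>x\<in>fvs (J \<times> I). tmap alphaA alphaB (R x) = R (tmap alphaB alphaA x))
     \<and> (\<forall>x\<in>fvs ((J \<times> I) \<times> I).
          R (tmap alphaB muA (assocr x))
          = tmap muA alphaB (assocl (tmap id R (assocr (tmap R id x)))))
     \<and> (\<forall>x\<in>fvs (J \<times> (J \<times> I)).
          R (tmap muB alphaA (assocl x))
          = tmap alphaA muB (assocr (tmap R id (assocl (tmap id R x)))))"

(* For T : D \<otimes> D \<rightarrow> D \<otimes> D, triple tensors are bracketed as D \<otimes> (D \<otimes> D);
T12 = T \<otimes> id (transported along the associator), T23 = id \<otimes> T, and
T13 (d \<otimes> d' \<otimes> d'') = d^T \<otimes> d' \<otimes> d''_T. *)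
definition T12 :: "(('d \<times> 'd \<Rightarrow>\<^sub>0 'k::field) \<Rightarrow> ('d \<times> 'd \<Rightarrow>\<^sub>0 'k))
    \<Rightarrow> ('d \<times> ('d \<times> 'd) \<Rightarrow>\<^sub>0 'k) \<Rightarrow> ('d \<times> ('d \<times> 'd) \<Rightarrow>\<^sub>0 'k)" where
  "T12 T = assocr \<circ> tmap T id \<circ> assocl"

definition T23 :: "(('d \<times> 'd \<Rightarrow>\<^sub>0 'k::field) \<Rightarrow> ('d \<times> 'd \<Rightarrow>\<^sub>0 'k))
    \<Rightarrow> ('d \<times> ('d \<times> 'd) \<Rightarrow>\<^sub>0 'k) \<Rightarrow> ('d \<times> ('d \<times> 'd) \<Rightarrow>\<^sub>0 'k)" where
  "T23 T = tmap id T"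

definition T13 :: "(('d \<times> 'd \<Rightarrow>\<^sub>0 'k::field) \<Rightarrow> ('d \<times> 'd \<Rightarrow>\<^sub>0 'k))
    \<Rightarrow> ('d \<times> ('d \<times> 'd) \<Rightarrow>\<^sub>0 'k) \<Rightarrow> ('d \<times> ('d \<times> 'd) \<Rightarrow>\<^sub>0 'k)" where
  "T13 T = lext (\<lambda>(p, (q, r)).
      lext (\<lambda>(s, u). Poly_Mapping.single (s, (q, u)) 1) (T (Poly_Mapping.single (p, r) 1)))"

definition hom_twistor :: "'d set \<Rightarrow> (('d \<times> 'd \<Rightarrow>\<^sub>0 'k::field) \<Rightarrow> ('d \<Rightarrow>\<^sub>0 'k))
    \<Rightarrow> (('d \<Rightarrow>\<^sub>0 'k) \<Rightarrow> ('d \<Rightarrow>\<^sub>0 'k)) \<Rightarrow> (('d \<times> 'd \<Rightarrow>\<^sub>0 'k) \<Rightarrow> ('d \<times> 'd \<Rightarrow>\<^sub>0 'k)) \<Rightarrow> bool" where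
  "hom_twistor K mu alpha T \<longleftrightarrow> is_lin (K \<times> K) (K \<times> K) T
     \<and> (\<forall>x\<in>fvs (K \<times> K). tmap alpha alpha (T x) = T (tmap alpha alpha x))
     \<and> (\<forall>x\<in>fvs (K \<times> (K \<times> K)). T (tmap alpha mu x) = tmap alpha mu (T13 T (T12 T x)))
     \<and> (\<forall>x\<in>fvs (K \<times> (K \<times> K)).
          T (tmap mu alpha (assocl x)) = tmap mu alpha (assocl (T13 T (T23 T x))))
     \<and> (\<forall>x\<in>fvs (K \<times> (K \<times> K)). T12 T (T23 T x) = T23 T (T12 T x))"

definition twist_T :: "(('j \<times> 'i \<Rightarrow>\<^sub>0 'k::field) \<Rightarrow> ('i \<times> 'j \<Rightarrow>\<^sub>0 'k))
    \<Rightarrow> (('i \<times> 'j) \<times> ('i \<times> 'j) \<Rightarrow>\<^sub>0 'k) \<Rightarrow> (('i \<times> 'j) \<times> ('i \<times> 'j) \<Rightarrow>\<^sub>0 'k)" where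
  "twist_T R = lext (\<lambda>((i, j), (i', j')).
      lext (\<lambda>(s, t). Poly_Mapping.single ((i, t), (s, j')) 1) (R (Poly_Mapping.single (j, i') 1)))"

end

theory Submission
  imports Defs
begin


abbreviation bv :: "'i \<Rightarrow> ('i \<Rightarrow>\<^sub>0 'k::field)" where "bv i \<equiv> Poly_Mapping.single i 1"

lemma lookup_smult[simp]: "Poly_Mapping.lookup (smult c x) k = c * Poly_Mapping.lookup x k"
  by (simp add: smult_def Poly_Mapping.map.rep_eq when_def)

lemma smult_add_right: "smult c (x + y) = smult c x + smult c y"
  by (rule poly_mapping_eqI) (simp add: lookup_add algebra_simps)
lemma smult_add_left: "smult (a + b) x = smult a x + smult b x"
  by (rule poly_mapping_eqI) (simp add: lookup_add algebra_simps)
lemma smult_smult[simp]: "smult c (smult d x) = smult (c * d) x"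
  by (rule poly_mapping_eqI) (simp add: algebra_simps)
lemma smult_one[simp]: "smult 1 x = x"
  by (rule poly_mapping_eqI) simp
lemma smult_zero_left[simp]: "smult 0 x = 0"
  by (rule poly_mapping_eqI) simp
lemma smult_zero_right[simp]: "smult c 0 = 0"
  by (rule poly_mapping_eqI) simp
lemma smult_single: "smult c (Poly_Mapping.single k v) = Poly_Mapping.single k (c * v)"
  by (rule poly_mapping_eqI) (simp add: lookup_single when_def)
lemma smult_sum: "smult c (sum f A) = (\<Sum>a\<in>A. smult c (f a))"
  by (induct A rule: infinite_finite_induct) (auto simp: smult_add_right)
lemma keys_smult: "Poly_Mapping.keys (smult c x) \<subseteq> Poly_Mapping.keys x"
  by (auto simp: in_keys_iff)

lemma lext_superset:
  assumes "finite S" "Poly_Mapping.keys z \<subseteq> S"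
  shows "lext g z = (\<Sum>i\<in>S. smult (Poly_Mapping.lookup z i) (g i))"
  unfolding lext_def
  by (rule sum.mono_neutral_left) (use assms in \<open>auto simp: in_keys_iff\<close>)

lemma lext_add: "lext g (x + y) = lext g x + lext g y"
proof -
  let ?S = "Poly_Mapping.keys x \<union> Poly_Mapping.keys y"
  have f: "finite ?S" by simp
  have "lext g (x + y) = (\<Sum>i\<in>?S. smult (Poly_Mapping.lookup (x + y) i) (g i))"
    using keys_add[of x y] by (intro lext_superset) auto
  also have "\<dots> = (\<Sum>i\<in>?S. smult (Poly_Mapping.lookup x i) (g i)) + (\<Sum>i\<in>?S. smult (Poly_Mapping.lookup y i) (g i))"
    by (simp add: lookup_add smult_add_left sum.distrib)
  also have "\<dots> = lext g x + lext g y"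
    by (simp add: lext_superset[OF f])
  finally show ?thesis .
qed

lemma lext_smult: "lext g (smult c x) = smult c (lext g x)"
proof -
  have "lext g (smult c x) = (\<Sum>i\<in>Poly_Mapping.keys x. smult (Poly_Mapping.lookup (smult c x) i) (g i))"
    using keys_smult[of c x] by (intro lext_superset) auto
  also have "\<dots> = smult c (lext g x)"
    by (simp add: lext_def smult_sum)
  finally show ?thesis .
qed

lemma lext_single_gen: "lext g (Poly_Mapping.single i c) = smult c (g i)"
  by (subst lext_superset[of "{i}"]) auto

lemma lext_bv[simp]: "lext g (bv i) = g i"
  by (simp add: lext_single_gen)

lemma lext_zero[simp]: "lext g 0 = 0"
  by (simp add: lext_def)

lemma lext_cong: "(\<And>i. i \<in> Poly_Mapping.keys z \<Longrightarrow> g i = h i) \<Longrightarrow> lext g z = lext h z"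
  unfolding lext_def by (rule sum.cong) auto

lemma lext_id: "lext bv z = z"
  unfolding lext_def
  by (rule poly_mapping_eqI) (auto simp: lookup_sum smult_single lookup_single when_def in_keys_iff)

definition lin :: "(('i \<Rightarrow>\<^sub>0 'k::field) \<Rightarrow> ('j \<Rightarrow>\<^sub>0 'k)) \<Rightarrow> bool" where
  "lin F \<longleftrightarrow> (\<forall>x y. F (x + y) = F x + F y) \<and> (\<forall>c x. F (smult c x) = smult c (F x))"

lemma lin_lext[simp]: "lin (lext g)"
  by (simp add: lin_def lext_add lext_smult)

lemma lin_add: "lin F \<Longrightarrow> F (x + y) = F x + F y" by (simp add: lin_def)
lemma lin_smult: "lin F \<Longrightarrow> F (smult c x) = smult c (F x)" by (simp add: lin_def)

lemma lin_zero: assumes "lin F" shows "F 0 = 0"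
proof -
  have "F (smult 0 0) = smult 0 (F 0)" by (rule lin_smult[OF assms])
  then show ?thesis by simp
qed

lemma lin_sum: "lin F \<Longrightarrow> F (sum f A) = (\<Sum>a\<in>A. F (f a))"
  by (induct A rule: infinite_finite_induct) (simp_all add: lin_zero lin_add)

lemma lin_lext_comm: assumes "lin F" shows "F (lext g z) = lext (\<lambda>i. F (g i)) z"
  unfolding lext_def by (simp add: lin_sum[OF assms] lin_smult[OF assms])

lemma lin_repr: assumes "lin F" shows "F z = lext (\<lambda>i. F (bv i)) z"
proof -
  have "F z = F (lext bv z)" by (simp add: lext_id)
  also have "\<dots> = lext (\<lambda>i. F (bv i)) z" by (rule lin_lext_comm[OF assms])
  finally show ?thesis .
qed

lemma lin_compI: "lin F \<Longrightarrow> lin G \<Longrightarrow> lin (\<lambda>x. F (G x))"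
  by (simp add: lin_def)

lemma lin_id[simp]: "lin id" "lin (\<lambda>x. x)"
  by (simp_all add: lin_def)

lemma lin_eq: assumes "lin F" "lin G" "\<And>k. F (bv k) = G (bv k)" shows "F z = G z"
  using lin_repr[OF assms(1), of z] lin_repr[OF assms(2), of z] assms(3) by simp

lemma fvs_iff: "x \<in> fvs I \<longleftrightarrow> Poly_Mapping.keys x \<subseteq> I" by (simp add: fvs_def)
lemma fvs_zero[simp]: "0 \<in> fvs I" by (simp add: fvs_def)
lemma fvs_add[simp]: "x \<in> fvs I \<Longrightarrow> y \<in> fvs I \<Longrightarrow> x + y \<in> fvs I"
  using keys_add[of x y] by (auto simp: fvs_def)
lemma fvs_smult[simp]: "x \<in> fvs I \<Longrightarrow> smult c x \<in> fvs I"
  using keys_smult[of c x] by (auto simp: fvs_def)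
lemma fvs_bv[simp]: "bv i \<in> fvs I \<longleftrightarrow> i \<in> I" by (simp add: fvs_def)
lemma fvs_UNIV[simp]: "x \<in> fvs UNIV" by (simp add: fvs_def)
lemma fvs_sum: "(\<And>a. a \<in> A \<Longrightarrow> f a \<in> fvs I) \<Longrightarrow> sum f A \<in> fvs I"
  by (induct A rule: infinite_finite_induct) auto
lemma lext_fvs: "(\<And>i. i \<in> Poly_Mapping.keys z \<Longrightarrow> g i \<in> fvs L) \<Longrightarrow> lext g z \<in> fvs L"
  unfolding lext_def by (intro fvs_sum fvs_smult) auto

definition lin_on :: "'i set \<Rightarrow> (('i \<Rightarrow>\<^sub>0 'k::field) \<Rightarrow> ('j \<Rightarrow>\<^sub>0 'k)) \<Rightarrow> bool" where
  "lin_on I F \<longleftrightarrow> (\<forall>x\<in>fvs I. \<forall>y\<in>fvs I. F (x + y) = F x + F y) \<and> (\<forall>c. \<forall>x\<in>fvs I. F (smult c x) = smult c (F x))"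

lemma lin_lin_on: "lin F \<Longrightarrow> lin_on I F" by (simp add: lin_def lin_on_def)
lemma is_lin_lin_on: "is_lin I J F \<Longrightarrow> lin_on I F" by (simp add: is_lin_def lin_on_def)
lemma is_lin_fvs: "is_lin I J F \<Longrightarrow> x \<in> fvs I \<Longrightarrow> F x \<in> fvs J" by (simp add: is_lin_def)
lemma is_lin_intro: "lin F \<Longrightarrow> (\<And>x. x \<in> fvs I \<Longrightarrow> F x \<in> fvs J) \<Longrightarrow> is_lin I J F"
  by (auto simp: is_lin_def lin_def)

lemma lin_on_comp: "lin_on I G \<Longrightarrow> (\<And>x. x \<in> fvs I \<Longrightarrow> G x \<in> fvs J) \<Longrightarrow> lin_on J F \<Longrightarrow> lin_on I (\<lambda>x. F (G x))"
  unfolding lin_on_def by (metis fvs_add fvs_smult)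

lemma lin_on_repr_aux:
  assumes "lin_on I F" "finite S" "S \<subseteq> I"
  shows "F (\<Sum>i\<in>S. smult (c i) (bv i)) = (\<Sum>i\<in>S. smult (c i) (F (bv i)))"
  using assms(2,3)
proof (induct S rule: finite_induct)
  case empty
  have "F 0 = 0" using assms(1) unfolding lin_on_def by (metis fvs_zero smult_zero_left smult_zero_right)
  then show ?case by simp
next
  case (insert a S)
  have h1: "(\<Sum>i\<in>S. smult (c i) (bv i)) \<in> fvs I" using insert by (intro fvs_sum) auto
  have h0: "bv a \<in> fvs I" using insert by auto
  have h2: "smult (c a) (bv a) \<in> fvs I" using h0 by (rule fvs_smult)
  have "F (\<Sum>i\<in>insert a S. smult (c i) (bv i)) = F (smult (c a) (bv a) + (\<Sum>i\<in>S. smult (c i) (bv i)))"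
    using insert by simp
  also have "\<dots> = F (smult (c a) (bv a)) + F (\<Sum>i\<in>S. smult (c i) (bv i))"
    using assms(1) h1 h2 unfolding lin_on_def by blast
  also have "F (smult (c a) (bv a)) = smult (c a) (F (bv a))"
    using assms(1) h0 unfolding lin_on_def by blast
  also have "F (\<Sum>i\<in>S. smult (c i) (bv i)) = (\<Sum>i\<in>S. smult (c i) (F (bv i)))"
    using insert by simp
  finally show ?case using insert by simp
qed

lemma lin_on_repr:
  assumes "lin_on I F" "z \<in> fvs I"
  shows "F z = lext (\<lambda>i. F (bv i)) z"
proof -
  have "F z = F (lext bv z)" by (simp add: lext_id)
  also have "\<dots> = lext (\<lambda>i. F (bv i)) z"
    unfolding lext_def by (rule lin_on_repr_aux) (use assms in \<open>auto simp: fvs_def\<close>)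
  finally show ?thesis .
qed

lemma lin_on_eq:
  assumes "lin_on I F" "lin_on I G" "\<And>k. k \<in> I \<Longrightarrow> F (bv k) = G (bv k)" "z \<in> fvs I"
  shows "F z = G z"
proof -
  have "F z = lext (\<lambda>i. F (bv i)) z" by (rule lin_on_repr[OF assms(1,4)])
  also have "\<dots> = lext (\<lambda>i. G (bv i)) z" using assms(3,4) by (intro lext_cong) (auto simp: fvs_def)
  also have "\<dots> = G z" by (rule lin_on_repr[OF assms(2,4), symmetric])
  finally show ?thesis .
qed

lemma finite_tensor: fixes x :: "'i \<Rightarrow>\<^sub>0 'k::field" shows "finite {p. (\<lambda>(i, j). Poly_Mapping.lookup x i * Poly_Mapping.lookup y j) p \<noteq> 0}"
proof -
  have "{p. (\<lambda>(i, j). Poly_Mapping.lookup x i * Poly_Mapping.lookup y j) p \<noteq> 0} \<subseteq> Poly_Mapping.keys x \<times> Poly_Mapping.keys y"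
  proof (rule subsetI)
    fix p assume "p \<in> {p. (\<lambda>(i, j). Poly_Mapping.lookup x i * Poly_Mapping.lookup y j) p \<noteq> 0}"
    then show "p \<in> Poly_Mapping.keys x \<times> Poly_Mapping.keys y" by (cases p) (simp add: in_keys_iff)
  qed
  then show ?thesis by (rule finite_subset) simp
qed

lemma lookup_tensor[simp]: "Poly_Mapping.lookup (tensor x y) (i, j) = Poly_Mapping.lookup x i * Poly_Mapping.lookup y j"
  unfolding tensor_def by (simp add: finite_tensor)

lemma keys_tensor: "Poly_Mapping.keys (tensor x y) \<subseteq> Poly_Mapping.keys x \<times> Poly_Mapping.keys y"
proof (rule subsetI)
  fix p assume "p \<in> Poly_Mapping.keys (tensor x y)"
  then show "p \<in> Poly_Mapping.keys x \<times> Poly_Mapping.keys y" by (cases p) (simp add: in_keys_iff)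
qed

lemma tensor_fvs[simp]: "x \<in> fvs I \<Longrightarrow> y \<in> fvs J \<Longrightarrow> tensor x y \<in> fvs (I \<times> J)"
  using keys_tensor[of x y] by (auto simp: fvs_def)

lemma tensor_add_left: "tensor (x + x') y = tensor x y + tensor x' y"
  by (rule poly_mapping_eqI) (auto simp: lookup_add algebra_simps)
lemma tensor_add_right: "tensor x (y + y') = tensor x y + tensor x y'"
  by (rule poly_mapping_eqI) (auto simp: lookup_add algebra_simps)
lemma tensor_smult_left: "tensor (smult c x) y = smult c (tensor x y)"
  by (rule poly_mapping_eqI) (auto simp: algebra_simps)
lemma tensor_smult_right: "tensor x (smult c y) = smult c (tensor x y)"
  by (rule poly_mapping_eqI) (auto simp: algebra_simps)
lemma tensor_single: "tensor (Poly_Mapping.single i a) (Poly_Mapping.single j b) = Poly_Mapping.single (i, j) (a * b)"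
  by (rule poly_mapping_eqI) (auto simp: lookup_single when_def split: if_splits)
lemma tensor_bv[simp]: "tensor (bv i) (bv j) = bv (i, j)"
  by (simp add: tensor_single)

lemma lin_tensor_left[simp]: "lin (\<lambda>x. tensor x y)"
  by (simp add: lin_def tensor_add_left tensor_smult_left)
lemma lin_tensor_right[simp]: "lin (\<lambda>y. tensor x y)"
  by (simp add: lin_def tensor_add_right tensor_smult_right)

lemma lin_on_compI: "lin_on J F \<Longrightarrow> lin G \<Longrightarrow> (\<And>x. x \<in> fvs I \<Longrightarrow> G x \<in> fvs J) \<Longrightarrow> lin_on I (\<lambda>x. F (G x))"
  by (simp add: lin_on_def lin_def)

lemma lin_tmap[simp]: "lin (tmap f g)" by (simp add: tmap_def)
lemma tmap_bv[simp]: "tmap f g (bv (i, j)) = tensor (f (bv i)) (g (bv j))"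
  by (simp add: tmap_def)

lemma lin_on_compI2: "lin F \<Longrightarrow> lin_on I G \<Longrightarrow> lin_on I (\<lambda>x. F (G x))"
  by (simp add: lin_on_def lin_def)


lemma tmap_tensor:
  assumes f: "lin_on I f" and g: "lin_on J g" and x: "x \<in> fvs I" and y: "y \<in> fvs J"
  shows "tmap f g (tensor x y) = tensor (f x) (g y)"
proof -
  have "\<forall>i\<in>I. tmap f g (tensor (bv i) y) = tensor (f (bv i)) (g y)"
  proof
    fix i assume "i \<in> I"
    have L1: "lin_on J (\<lambda>y. tmap f g (tensor (bv i) y))"
      by (rule lin_lin_on, rule lin_compI) simp_all
    have L2: "lin_on J (\<lambda>y. tensor (f (bv i)) (g y))"
      by (intro lin_on_compI2[OF lin_tensor_right] g)
    show "tmap f g (tensor (bv i) y) = tensor (f (bv i)) (g y)"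
      by (rule lin_on_eq[OF L1 L2 _ y]) simp
  qed
  moreover have L1: "lin_on I (\<lambda>x. tmap f g (tensor x y))"
    by (rule lin_lin_on, rule lin_compI) simp_all
  moreover have L2: "lin_on I (\<lambda>x. tensor (f x) (g y))"
    by (intro lin_on_compI2[OF lin_tensor_left] f)
  ultimately show ?thesis
    by (intro lin_on_eq[OF L1 L2 _ x]) auto
qed

lemma tmap_fvs:
  assumes "\<And>i. i \<in> I \<Longrightarrow> f (bv i) \<in> fvs I2" "\<And>j. j \<in> J \<Longrightarrow> g (bv j) \<in> fvs J2" "x \<in> fvs (I \<times> J)"
  shows "tmap f g x \<in> fvs (I2 \<times> J2)"
  unfolding tmap_def
proof (rule lext_fvs)
  fix p assume "p \<in> Poly_Mapping.keys x"
  then obtain i j where "p = (i, j)" "i \<in> I" "j \<in> J" using assms(3) by (auto simp: fvs_def)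
  then show "(case p of (i, j) \<Rightarrow> tensor (f (bv i)) (g (bv j))) \<in> fvs (I2 \<times> J2)"
    using assms(1)[OF \<open>i \<in> I\<close>] assms(2)[OF \<open>j \<in> J\<close>] by simp
qed



lemma lin_assocl[simp]: "lin assocl" by (simp add: assocl_def)
lemma lin_assocr[simp]: "lin assocr" by (simp add: assocr_def)
lemma lin_mid_swap[simp]: "lin mid_swap" by (simp add: mid_swap_def)
lemma lin_twist_T[simp]: "lin (twist_T R)" by (simp add: twist_T_def)
lemma lin_T13[simp]: "lin (T13 T)" by (simp add: T13_def)

lemma assocl_bv[simp]: "assocl (bv (a, (b, c))) = bv ((a, b), c)" by (simp add: assocl_def)
lemma assocr_bv[simp]: "assocr (bv ((a, b), c)) = bv (a, (b, c))" by (simp add: assocr_def)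
lemma mid_swap_bv[simp]: "mid_swap (bv ((i, j), (i', j'))) = bv ((i, i'), (j, j'))" by (simp add: mid_swap_def)

lemma lext_lin_param:
  assumes "\<And>k. lin (\<lambda>a. h a k)"
  shows "lin (\<lambda>a. lext (h a) w)"
  using assms unfolding lin_def lext_def
  by (simp add: sum.distrib smult_add_right smult_sum mult.commute)

lemma assocl_assocr[simp]: "assocl (assocr y) = y"
proof -
  have "(\<lambda>y. assocl (assocr y)) y = (\<lambda>y. y) y"
    by (rule lin_eq) (auto intro: lin_compI simp: split_beta assocr_def assocl_def)
  then show ?thesis by simp
qed

lemma assocr_assocl[simp]: "assocr (assocl y) = y"
proof -
  have "(\<lambda>y. assocr (assocl y)) y = (\<lambda>y. y) y"
    by (rule lin_eq) (auto intro: lin_compI simp: split_beta assocr_def assocl_def)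
  then show ?thesis by simp
qed

lemma assocl_tensor: "assocl (tensor a (tensor b c)) = tensor (tensor a b) c"
proof -
  have 1: "assocl (tensor (bv i) (tensor (bv j) c)) = tensor (tensor (bv i) (bv j)) c" for i j
    by (rule lin_eq[where F="\<lambda>c. assocl (tensor (bv i) (tensor (bv j) c))" and G="\<lambda>c. tensor (tensor (bv i) (bv j)) c" and z=c])
       (simp_all add: lin_def tensor_add_right tensor_smult_right lext_add lext_smult assocl_def)
  have 2: "assocl (tensor (bv i) (tensor b c)) = tensor (tensor (bv i) b) c" for i
    by (rule lin_eq[where F="\<lambda>b. assocl (tensor (bv i) (tensor b c))" and G="\<lambda>b. tensor (tensor (bv i) b) c" and z=b])
       (simp add: lin_def tensor_add_right tensor_add_left tensor_smult_right tensor_smult_left lext_add lext_smult assocl_def,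
        simp add: lin_def tensor_add_right tensor_add_left tensor_smult_right tensor_smult_left lext_add lext_smult assocl_def, simp add: 1[simplified])
  show ?thesis
    by (rule lin_eq[where F="\<lambda>a. assocl (tensor a (tensor b c))" and G="\<lambda>a. tensor (tensor a b) c" and z=a])
       (simp add: lin_def tensor_add_right tensor_add_left tensor_smult_right tensor_smult_left lext_add lext_smult assocl_def,
        simp add: lin_def tensor_add_right tensor_add_left tensor_smult_right tensor_smult_left lext_add lext_smult assocl_def, simp add: 2[simplified])
qed

lemma mid_swap_tensor: "mid_swap (tensor (tensor a b) (tensor a' b')) = tensor (tensor a a') (tensor b b')"
proof -
  have 1: "mid_swap (tensor (tensor (bv i) (bv j)) (tensor (bv i') b')) = tensor (tensor (bv i) (bv i')) (tensor (bv j) b')" for i j i'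
    by (rule lin_eq[where F="\<lambda>b'. mid_swap (tensor (tensor (bv i) (bv j)) (tensor (bv i') b'))" and G="\<lambda>b'. tensor (tensor (bv i) (bv i')) (tensor (bv j) b')" and z=b'])
       (simp_all add: lin_def tensor_add_right tensor_add_left tensor_smult_right tensor_smult_left lext_add lext_smult mid_swap_def)
  have 2: "mid_swap (tensor (tensor (bv i) (bv j)) (tensor a' b')) = tensor (tensor (bv i) a') (tensor (bv j) b')" for i j
    by (rule lin_eq[where F="\<lambda>a'. mid_swap (tensor (tensor (bv i) (bv j)) (tensor a' b'))" and G="\<lambda>a'. tensor (tensor (bv i) a') (tensor (bv j) b')" and z=a'])
       (simp add: lin_def tensor_add_right tensor_add_left tensor_smult_right tensor_smult_left lext_add lext_smult mid_swap_def,
        simp add: lin_def tensor_add_right tensor_add_left tensor_smult_right tensor_smult_left lext_add lext_smult mid_swap_def, simp add: 1[simplified])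
  have 3: "mid_swap (tensor (tensor (bv i) b) (tensor a' b')) = tensor (tensor (bv i) a') (tensor b b')" for i
    by (rule lin_eq[where F="\<lambda>b. mid_swap (tensor (tensor (bv i) b) (tensor a' b'))" and G="\<lambda>b. tensor (tensor (bv i) a') (tensor b b')" and z=b])
       (simp add: lin_def tensor_add_right tensor_add_left tensor_smult_right tensor_smult_left lext_add lext_smult mid_swap_def,
        simp add: lin_def tensor_add_right tensor_add_left tensor_smult_right tensor_smult_left lext_add lext_smult mid_swap_def, simp add: 2[simplified])
  show ?thesis
    by (rule lin_eq[where F="\<lambda>a. mid_swap (tensor (tensor a b) (tensor a' b'))" and G="\<lambda>a. tensor (tensor a a') (tensor b b')" and z=a])
       (simp add: lin_def tensor_add_right tensor_add_left tensor_smult_right tensor_smult_left lext_add lext_smult mid_swap_def,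
        simp add: lin_def tensor_add_right tensor_add_left tensor_smult_right tensor_smult_left lext_add lext_smult mid_swap_def, simp add: 3[simplified])
qed



definition phi :: "('i \<Rightarrow>\<^sub>0 'k::field) \<Rightarrow> ('i \<times> 'j \<Rightarrow>\<^sub>0 'k) \<Rightarrow> ('j \<Rightarrow>\<^sub>0 'k) \<Rightarrow> (('i \<times> 'j) \<times> ('i \<times> 'j) \<Rightarrow>\<^sub>0 'k)" where
  "phi a w b' = lext (\<lambda>(s, t). tensor (tensor a (bv t)) (tensor (bv s) b')) w"

lemma lin_phi_w[simp]: "lin (\<lambda>w. phi a w b')"
  by (simp add: phi_def)

lemma lin_phi_a[simp]: "lin (\<lambda>a. phi a w b')"
  unfolding phi_def
  by (rule lext_lin_param) (simp add: split_beta lin_def tensor_add_left tensor_smult_left)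

lemma lin_phi_b[simp]: "lin (\<lambda>b'. phi a w b')"
  unfolding phi_def
  by (rule lext_lin_param) (simp add: split_beta lin_def tensor_add_right tensor_smult_right tensor_add_left tensor_smult_left)

lemma phi_bv[simp]: "phi a (bv (s, t)) b' = tensor (tensor a (bv t)) (tensor (bv s) b')"
  by (simp add: phi_def)

lemma phi_tensor: "phi a (tensor x y) b' = tensor (tensor a y) (tensor x b')"
proof -
  have 1: "phi a (tensor (bv s) y) b' = tensor (tensor a y) (tensor (bv s) b')" for s
    by (rule lin_eq[where F="\<lambda>y. phi a (tensor (bv s) y) b'" and G="\<lambda>y. tensor (tensor a y) (tensor (bv s) b')" and z=y])
       (rule lin_compI, simp, simp, simp add: lin_def tensor_add_right tensor_add_left tensor_smult_right tensor_smult_left, simp)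
  show ?thesis
    by (rule lin_eq[where F="\<lambda>x. phi a (tensor x y) b'" and G="\<lambda>x. tensor (tensor a y) (tensor x b')" and z=x])
       (rule lin_compI, simp, simp, simp add: lin_def tensor_add_right tensor_add_left tensor_smult_right tensor_smult_left, simp add: 1)
qed

lemma twist_T_bv: "twist_T R (bv ((i, j), (i', j'))) = lext (\<lambda>(s, t). bv ((i, t), (s, j'))) (R (bv (j, i')))"
  by (simp add: twist_T_def)

lemma twist_T_tensor:
  assumes R: "lin_on (J \<times> I) R" and b: "b \<in> fvs J" and a': "a' \<in> fvs I"
  shows "twist_T R (tensor (tensor a b) (tensor a' b')) = phi a (R (tensor b a')) b'"
proof -
  have A: "twist_T R (tensor (tensor (bv i) (bv j)) (tensor (bv i') (bv j'))) = phi (bv i) (R (tensor (bv j) (bv i'))) (bv j')" for i j i' j'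
    by (simp add: twist_T_bv phi_def)
  have B: "twist_T R (tensor (tensor (bv i) (bv j)) (tensor a' (bv j'))) = phi (bv i) (R (tensor (bv j) a')) (bv j')"
    if "j \<in> J" "a' \<in> fvs I" for i j j' a'
  proof (rule lin_on_eq[where F="\<lambda>a'. twist_T R (tensor (tensor (bv i) (bv j)) (tensor a' (bv j')))"
        and G="\<lambda>a'. phi (bv i) (R (tensor (bv j) a')) (bv j')" and z=a' and I=I])
    show "lin_on I (\<lambda>a'. twist_T R (tensor (tensor (bv i) (bv j)) (tensor a' (bv j'))))"
      by (rule lin_lin_on) (simp add: lin_def tensor_add_right tensor_add_left tensor_smult_right tensor_smult_left lin_add[OF lin_twist_T] lin_smult[OF lin_twist_T])
    show "lin_on I (\<lambda>a'. phi (bv i) (R (tensor (bv j) a')) (bv j'))"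
      by (rule lin_on_compI2[OF lin_phi_w], rule lin_on_compI[OF R lin_tensor_right]) (simp add: that)
  qed (use A that in simp_all)
  have C: "twist_T R (tensor (tensor (bv i) b) (tensor a' (bv j'))) = phi (bv i) (R (tensor b a')) (bv j')"
    if "b \<in> fvs J" "a' \<in> fvs I" for i j' b a'
  proof (rule lin_on_eq[where F="\<lambda>b. twist_T R (tensor (tensor (bv i) b) (tensor a' (bv j')))"
        and G="\<lambda>b. phi (bv i) (R (tensor b a')) (bv j')" and z=b and I=J])
    show "lin_on J (\<lambda>b. twist_T R (tensor (tensor (bv i) b) (tensor a' (bv j'))))"
      by (rule lin_lin_on) (simp add: lin_def tensor_add_right tensor_add_left tensor_smult_right tensor_smult_left lin_add[OF lin_twist_T] lin_smult[OF lin_twist_T])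
    show "lin_on J (\<lambda>b. phi (bv i) (R (tensor b a')) (bv j'))"
      by (rule lin_on_compI2[OF lin_phi_w], rule lin_on_compI[OF R lin_tensor_left]) (simp add: that)
  qed (use B that in simp_all)
  have D: "twist_T R (tensor (tensor (bv i) b) (tensor a' b')) = phi (bv i) (R (tensor b a')) b'" for i
    by (rule lin_eq[where F="\<lambda>b'. twist_T R (tensor (tensor (bv i) b) (tensor a' b'))" and G="\<lambda>b'. phi (bv i) (R (tensor b a')) b'" and z=b'])
       (simp add: lin_def tensor_add_right tensor_smult_right lin_add[OF lin_twist_T] lin_smult[OF lin_twist_T], simp, use C[OF b a'] in simp)
  show ?thesis
    by (rule lin_eq[where F="\<lambda>a. twist_T R (tensor (tensor a b) (tensor a' b'))" and G="\<lambda>a. phi a (R (tensor b a')) b'" and z=a])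
       (simp add: lin_def tensor_add_left tensor_smult_left lin_add[OF lin_twist_T] lin_smult[OF lin_twist_T], simp, use D in simp)
qed



lemma lin_repr2: assumes "lin F" shows "F z = lext (\<lambda>(s, t). F (bv (s, t))) z"
proof -
  have "(\<lambda>(s, t). F (bv (s, t))) = (\<lambda>i. F (bv i))" by (auto simp: fun_eq_iff)
  then show ?thesis using lin_repr[OF assms, of z] by simp
qed

lemma tmap_lext: "tmap f g (lext h z) = lext (\<lambda>k. tmap f g (h k)) z" by (rule lin_lext_comm) simp
lemma assocl_lext: "assocl (lext h z) = lext (\<lambda>k. assocl (h k)) z" by (rule lin_lext_comm) simp
lemma assocr_lext: "assocr (lext h z) = lext (\<lambda>k. assocr (h k)) z" by (rule lin_lext_comm) simp
lemma mid_swap_lext: "mid_swap (lext h z) = lext (\<lambda>k. mid_swap (h k)) z" by (rule lin_lext_comm) simp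
lemma twist_T_lext: "twist_T R (lext h z) = lext (\<lambda>k. twist_T R (h k)) z" by (rule lin_lext_comm) simp
lemma T13_lext: "T13 T (lext h z) = lext (\<lambda>k. T13 T (h k)) z" by (rule lin_lext_comm) simp
lemma lext_lext: "lext g (lext h z) = lext (\<lambda>k. lext g (h k)) z" by (rule lin_lext_comm) simp
lemma phi_lext: "phi a (lext h z) b' = lext (\<lambda>k. phi a (h k) b') z" by (rule lin_lext_comm[where F="\<lambda>w. phi a w b'"]) simp
lemma tensor_lext_left: "tensor (lext h z) y = lext (\<lambda>k. tensor (h k) y) z" by (rule lin_lext_comm[where F="\<lambda>x. tensor x y"]) simp
lemma tensor_lext_right: "tensor x (lext h z) = lext (\<lambda>k. tensor x (h k)) z" by (rule lin_lext_comm[where F="\<lambda>y. tensor x y"]) simp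

lemmas lext_push = tmap_lext assocl_lext assocr_lext mid_swap_lext twist_T_lext T13_lext lext_lext phi_lext tensor_lext_left tensor_lext_right

lemma tmap_as_lext: "tmap f g w = lext (\<lambda>(s, t). tensor (f (bv s)) (g (bv t))) w"
  by (simp add: tmap_def)

locale twsetup =
  fixes I :: "'i set" and J :: "'j set"
    and muA :: "('i \<times> 'i \<Rightarrow>\<^sub>0 'k::field) \<Rightarrow> ('i \<Rightarrow>\<^sub>0 'k)" and alphaA :: "('i \<Rightarrow>\<^sub>0 'k) \<Rightarrow> ('i \<Rightarrow>\<^sub>0 'k)"
    and muB :: "('j \<times> 'j \<Rightarrow>\<^sub>0 'k) \<Rightarrow> ('j \<Rightarrow>\<^sub>0 'k)" and alphaB :: "('j \<Rightarrow>\<^sub>0 'k) \<Rightarrow> ('j \<Rightarrow>\<^sub>0 'k)"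
    and R :: "('j \<times> 'i \<Rightarrow>\<^sub>0 'k) \<Rightarrow> ('i \<times> 'j \<Rightarrow>\<^sub>0 'k)"
  assumes HA: "hom_assoc I muA alphaA"
    and HB: "hom_assoc J muB alphaB"
    and TW: "hom_twisting I J muA alphaA muB alphaB R"
begin

lemma muA_lin: "is_lin (I \<times> I) I muA" using HA by (simp add: hom_assoc_def)
lemma alphaA_lin: "is_lin I I alphaA" using HA by (simp add: hom_assoc_def)
lemma muB_lin: "is_lin (J \<times> J) J muB" using HB by (simp add: hom_assoc_def)
lemma alphaB_lin: "is_lin J J alphaB" using HB by (simp add: hom_assoc_def)
lemma R_lin: "is_lin (J \<times> I) (I \<times> J) R" using TW by (simp add: hom_twisting_def)

lemma muA_bv: "i \<in> I \<Longrightarrow> i' \<in> I \<Longrightarrow> muA (bv (i, i')) \<in> fvs I" using is_lin_fvs[OF muA_lin] by simp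
lemma muB_bv: "j \<in> J \<Longrightarrow> j' \<in> J \<Longrightarrow> muB (bv (j, j')) \<in> fvs J" using is_lin_fvs[OF muB_lin] by simp
lemma alphaA_bv: "i \<in> I \<Longrightarrow> alphaA (bv i) \<in> fvs I" using is_lin_fvs[OF alphaA_lin] by simp
lemma alphaB_bv: "j \<in> J \<Longrightarrow> alphaB (bv j) \<in> fvs J" using is_lin_fvs[OF alphaB_lin] by simp
lemma R_bv: "j \<in> J \<Longrightarrow> i \<in> I \<Longrightarrow> R (bv (j, i)) \<in> fvs (I \<times> J)" using is_lin_fvs[OF R_lin] by simp

lemma R_keys: "j \<in> J \<Longrightarrow> i \<in> I \<Longrightarrow> k \<in> Poly_Mapping.keys (R (bv (j, i))) \<Longrightarrow> fst k \<in> I \<and> snd k \<in> J"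
  using R_bv[of j i] by (auto simp: fvs_def)

lemma R_alpha_bv:
  assumes "j \<in> J" "i \<in> I"
  shows "R (tensor (alphaB (bv j)) (alphaA (bv i))) = tmap alphaA alphaB (R (bv (j, i)))"
proof -
  have "bv (j, i) \<in> fvs (J \<times> I)" using assms by simp
  then have "tmap alphaA alphaB (R (bv (j, i))) = R (tmap alphaB alphaA (bv (j, i)))"
    using TW unfolding hom_twisting_def by blast
  then show ?thesis by simp
qed

lemma e1: "tmap muA alphaB (assocl (tmap id R (assocr (tensor z (bv i''))))) =
   lext (\<lambda>(s, t). lext (\<lambda>(s', t'). tensor (muA (bv (s, s'))) (alphaB (bv t'))) (R (bv (t, i'')))) z"
proof -
  have e2: "tmap muA alphaB (assocl (tensor (bv s) w)) = lext (\<lambda>(s', t'). tensor (muA (bv (s, s'))) (alphaB (bv t'))) w" for s w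
    by (rule trans[OF lin_repr2]) (simp_all add: lin_def tensor_add_right tensor_smult_right lin_add[OF lin_tmap] lin_smult[OF lin_tmap] lin_add[OF lin_assocl] lin_smult[OF lin_assocl])
  show ?thesis
    by (rule trans[OF lin_repr2]) (simp_all add: e2 lin_def tensor_add_left tensor_smult_left lin_add[OF lin_tmap] lin_smult[OF lin_tmap] lin_add[OF lin_assocl] lin_smult[OF lin_assocl] lin_add[OF lin_assocr] lin_smult[OF lin_assocr])
qed

lemma Rm3:
  assumes "j \<in> J" "i' \<in> I" "i'' \<in> I"
  shows "R (tensor (alphaB (bv j)) (muA (bv (i', i'')))) =
    lext (\<lambda>(s, t). lext (\<lambda>(s', t'). tensor (muA (bv (s, s'))) (alphaB (bv t'))) (R (bv (t, i'')))) (R (bv (j, i')))"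
proof -
  have x: "bv ((j, i'), i'') \<in> fvs ((J \<times> I) \<times> I)" using assms by simp
  have "R (tensor (alphaB (bv j)) (muA (bv (i', i'')))) = R (tmap alphaB muA (assocr (bv ((j, i'), i''))))" by simp
  also have "\<dots> = tmap muA alphaB (assocl (tmap id R (assocr (tmap R id (bv ((j, i'), i''))))))"
    using TW x unfolding hom_twisting_def by blast
  also have "\<dots> = tmap muA alphaB (assocl (tmap id R (assocr (tensor (R (bv (j, i'))) (bv i'')))))" by simp
  also note e1
  finally show ?thesis .
qed

lemma e1': "tmap alphaA muB (assocr (tmap R id (assocl (tensor (bv j) w)))) =
   lext (\<lambda>(s, t). lext (\<lambda>(s', t'). tensor (alphaA (bv s')) (muB (bv (t', t)))) (R (bv (j, s)))) w"
proof -
  have e2: "tmap alphaA muB (assocr (tensor z (bv t))) = lext (\<lambda>(s', t'). tensor (alphaA (bv s')) (muB (bv (t', t)))) z" for z t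
    by (rule trans[OF lin_repr2]) (simp_all add: lin_def tensor_add_left tensor_smult_left lin_add[OF lin_tmap] lin_smult[OF lin_tmap] lin_add[OF lin_assocr] lin_smult[OF lin_assocr])
  show ?thesis
    by (rule trans[OF lin_repr2]) (simp_all add: e2 lin_def tensor_add_right tensor_smult_right lin_add[OF lin_tmap] lin_smult[OF lin_tmap] lin_add[OF lin_assocl] lin_smult[OF lin_assocl] lin_add[OF lin_assocr] lin_smult[OF lin_assocr])
qed

lemma Rm4:
  assumes "j \<in> J" "j' \<in> J" "i'' \<in> I"
  shows "R (tensor (muB (bv (j, j'))) (alphaA (bv i''))) =
    lext (\<lambda>(s, t). lext (\<lambda>(s', t'). tensor (alphaA (bv s')) (muB (bv (t', t)))) (R (bv (j, s)))) (R (bv (j', i'')))"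
proof -
  have x: "bv (j, (j', i'')) \<in> fvs (J \<times> (J \<times> I))" using assms by simp
  have "R (tensor (muB (bv (j, j'))) (alphaA (bv i''))) = R (tmap muB alphaA (assocl (bv (j, (j', i'')))))" by simp
  also have "\<dots> = tmap alphaA muB (assocr (tmap R id (assocl (tmap id R (bv (j, (j', i'')))))))"
    using TW x unfolding hom_twisting_def by blast
  also have "\<dots> = tmap alphaA muB (assocr (tmap R id (assocl (tensor (bv j) (R (bv (j', i'')))))))" by simp
  also note e1'
  finally show ?thesis .
qed

end


lemma tensor_mult_bv[simp]: "tensor_mult muA muB (bv ((i, j), (i', j'))) = tensor (muA (bv (i, i'))) (muB (bv (j, j')))"
  by (simp add: tensor_mult_def)

lemma T13_bv[simp]: "T13 T (bv (p, (q, r))) = lext (\<lambda>(s, u). bv (s, (q, u))) (T (bv (p, r)))"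
  by (simp add: T13_def)

lemma lext_swap: "lext (\<lambda>a. lext (\<lambda>b. h a b) w) z = lext (\<lambda>b. lext (\<lambda>a. h a b) z) w"
  unfolding lext_def by (simp add: smult_sum mult.commute sum.swap[of _ "Poly_Mapping.keys z"])

context twsetup begin

lemma c2_bv:
  assumes "i \<in> I" "i' \<in> I" "j \<in> J" "j' \<in> J"
  shows "tmap (tmap alphaA alphaB) (tmap alphaA alphaB) (twist_T R (bv ((i, j), (i', j'))))
       = twist_T R (tmap (tmap alphaA alphaB) (tmap alphaA alphaB) (bv ((i, j), (i', j'))))"
proof -
  let ?N = "lext (\<lambda>(s, t). tensor (tensor (alphaA (bv i)) (alphaB (bv t))) (tensor (alphaA (bv s)) (alphaB (bv j')))) (R (bv (j, i')))"
  have L: "tmap (tmap alphaA alphaB) (tmap alphaA alphaB) (twist_T R (bv ((i, j), (i', j')))) = ?N"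
    by (simp add: twist_T_bv lext_push split_beta split_beta')
  have "twist_T R (tmap (tmap alphaA alphaB) (tmap alphaA alphaB) (bv ((i, j), (i', j'))))
     = twist_T R (tensor (tensor (alphaA (bv i)) (alphaB (bv j))) (tensor (alphaA (bv i')) (alphaB (bv j'))))" by simp
  also have "\<dots> = phi (alphaA (bv i)) (R (tensor (alphaB (bv j)) (alphaA (bv i')))) (alphaB (bv j'))"
    by (rule twist_T_tensor[OF is_lin_lin_on[OF R_lin]]) (simp_all add: alphaA_bv alphaB_bv assms)
  also have "\<dots> = phi (alphaA (bv i)) (tmap alphaA alphaB (R (bv (j, i')))) (alphaB (bv j'))"
    by (simp add: R_alpha_bv assms)
  also have "\<dots> = ?N"
    unfolding tmap_as_lext[of alphaA alphaB] by (simp add: phi_lext phi_tensor split_beta split_beta')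
  finally show ?thesis using L by simp
qed

lemma c3_bv:
  assumes "i \<in> I" "i' \<in> I" "i'' \<in> I" "j \<in> J" "j' \<in> J" "j'' \<in> J"
  shows "twist_T R (tmap (tmap alphaA alphaB) (tensor_mult muA muB) (bv ((i, j), ((i', j'), (i'', j'')))))
       = tmap (tmap alphaA alphaB) (tensor_mult muA muB) (T13 (twist_T R) (T12 (twist_T R) (bv ((i, j), ((i', j'), (i'', j''))))))"
proof -
  let ?N = "lext (\<lambda>(s, t). lext (\<lambda>(s', t'). tensor (tensor (alphaA (bv i)) (alphaB (bv t'))) (tensor (muA (bv (s, s'))) (muB (bv (j', j''))))) (R (bv (t, i'')))) (R (bv (j, i')))"
  have "twist_T R (tmap (tmap alphaA alphaB) (tensor_mult muA muB) (bv ((i, j), ((i', j'), (i'', j'')))))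
     = twist_T R (tensor (tensor (alphaA (bv i)) (alphaB (bv j))) (tensor (muA (bv (i', i''))) (muB (bv (j', j'')))))" by simp
  also have "\<dots> = phi (alphaA (bv i)) (R (tensor (alphaB (bv j)) (muA (bv (i', i''))))) (muB (bv (j', j'')))"
    by (rule twist_T_tensor[OF is_lin_lin_on[OF R_lin]]) (simp_all add: muA_bv alphaB_bv assms)
  also have "\<dots> = ?N"
    by (simp add: Rm3 assms phi_lext phi_tensor split_beta split_beta')
  finally have L: "twist_T R (tmap (tmap alphaA alphaB) (tensor_mult muA muB) (bv ((i, j), ((i', j'), (i'', j''))))) = ?N" .
  have "tmap (tmap alphaA alphaB) (tensor_mult muA muB) (T13 (twist_T R) (T12 (twist_T R) (bv ((i, j), ((i', j'), (i'', j'')))))) = ?N"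
    by (simp add: T12_def twist_T_bv lext_push split_beta split_beta')
  then show ?thesis using L by simp
qed


lemma c4_bv:
  assumes "i \<in> I" "i' \<in> I" "i'' \<in> I" "j \<in> J" "j' \<in> J" "j'' \<in> J"
  shows "twist_T R (tmap (tensor_mult muA muB) (tmap alphaA alphaB) (assocl (bv ((i, j), ((i', j'), (i'', j''))))))
       = tmap (tensor_mult muA muB) (tmap alphaA alphaB) (assocl (T13 (twist_T R) (T23 (twist_T R) (bv ((i, j), ((i', j'), (i'', j'')))))))"
proof -
  let ?N = "lext (\<lambda>(s, t). lext (\<lambda>(s', t'). tensor (tensor (muA (bv (i, i'))) (muB (bv (t', t)))) (tensor (alphaA (bv s')) (alphaB (bv j'')))) (R (bv (j, s)))) (R (bv (j', i'')))"
  have "twist_T R (tmap (tensor_mult muA muB) (tmap alphaA alphaB) (assocl (bv ((i, j), ((i', j'), (i'', j''))))))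
     = twist_T R (tensor (tensor (muA (bv (i, i'))) (muB (bv (j, j')))) (tensor (alphaA (bv i'')) (alphaB (bv j''))))" by simp
  also have "\<dots> = phi (muA (bv (i, i'))) (R (tensor (muB (bv (j, j'))) (alphaA (bv i'')))) (alphaB (bv j''))"
    by (rule twist_T_tensor[OF is_lin_lin_on[OF R_lin]]) (simp_all add: muB_bv alphaA_bv assms)
  also have "\<dots> = ?N"
    by (simp add: Rm4 assms phi_lext phi_tensor split_beta split_beta')
  finally have L: "twist_T R (tmap (tensor_mult muA muB) (tmap alphaA alphaB) (assocl (bv ((i, j), ((i', j'), (i'', j'')))))) = ?N" .
  have "tmap (tensor_mult muA muB) (tmap alphaA alphaB) (assocl (T13 (twist_T R) (T23 (twist_T R) (bv ((i, j), ((i', j'), (i'', j''))))))) = ?N"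
    by (simp add: T23_def twist_T_bv lext_push split_beta split_beta')
  then show ?thesis using L by simp
qed

lemma c5_bv:
  "T12 (twist_T R) (T23 (twist_T R) (bv ((i, j), ((i', j'), (i'', j''))))) = T23 (twist_T R) (T12 (twist_T R) (bv ((i, j), ((i', j'), (i'', j'')))))"
proof -
  let ?N = "lext (\<lambda>(s, t). lext (\<lambda>(s', t'). bv ((i, t'), ((s', t), (s, j'')))) (R (bv (j, i')))) (R (bv (j', i'')))"
  have L: "T12 (twist_T R) (T23 (twist_T R) (bv ((i, j), ((i', j'), (i'', j''))))) = ?N"
    by (simp add: T12_def T23_def twist_T_bv lext_push split_beta split_beta')
  have "T23 (twist_T R) (T12 (twist_T R) (bv ((i, j), ((i', j'), (i'', j''))))) = lext (\<lambda>(s', t'). lext (\<lambda>(s, t). bv ((i, t'), ((s', t), (s, j'')))) (R (bv (j', i'')))) (R (bv (j, i')))"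
    by (simp add: T12_def T23_def twist_T_bv lext_push split_beta split_beta')
  also have "\<dots> = ?N"
    by (simp add: split_beta' lext_swap[where z="R (bv (j, i'))"])
  finally show ?thesis using L by simp
qed

end


lemma assocl_fvs: "y \<in> fvs (A \<times> (B \<times> C)) \<Longrightarrow> assocl y \<in> fvs ((A \<times> B) \<times> C)"
  unfolding assocl_def by (rule lext_fvs) (auto simp: fvs_def split_beta)
lemma assocr_fvs: "y \<in> fvs ((A \<times> B) \<times> C) \<Longrightarrow> assocr y \<in> fvs (A \<times> (B \<times> C))"
  unfolding assocr_def by (rule lext_fvs) (auto simp: fvs_def split_beta)
lemma mid_swap_fvs: "y \<in> fvs ((I \<times> J) \<times> (I \<times> J)) \<Longrightarrow> mid_swap y \<in> fvs ((I \<times> I) \<times> (J \<times> J))"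
  unfolding mid_swap_def by (rule lext_fvs) (auto simp: fvs_def split_beta)

lemma ha_map:
  fixes mu :: "('a \<times> 'a \<Rightarrow>\<^sub>0 'k::field) \<Rightarrow> ('a \<Rightarrow>\<^sub>0 'k)"
  assumes mu: "is_lin (K \<times> K) K mu" and al: "is_lin K K al"
    and mult: "\<And>p q. p \<in> K \<Longrightarrow> q \<in> K \<Longrightarrow> al (mu (bv (p, q))) = mu (tensor (al (bv p)) (al (bv q)))"
    and ass: "\<And>p q r. p \<in> K \<Longrightarrow> q \<in> K \<Longrightarrow> r \<in> K \<Longrightarrow> mu (tensor (al (bv p)) (mu (bv (q, r)))) = mu (tensor (mu (bv (p, q))) (al (bv r)))"
  shows "\<forall>y\<in>fvs (K \<times> K). al (mu y) = mu (tmap al al y)"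
    and "\<forall>y\<in>fvs (K \<times> (K \<times> K)). mu (tmap al mu y) = mu (tmap mu al (assocl y))"
proof -
  have alb: "p \<in> K \<Longrightarrow> al (bv p) \<in> fvs K" for p using is_lin_fvs[OF al] by simp
  have mub: "q \<in> K \<times> K \<Longrightarrow> mu (bv q) \<in> fvs K" for q using is_lin_fvs[OF mu] by simp
  show "\<forall>y\<in>fvs (K \<times> K). al (mu y) = mu (tmap al al y)"
  proof
    fix y :: "'a \<times> 'a \<Rightarrow>\<^sub>0 'k" assume y: "y \<in> fvs (K \<times> K)"
    show "al (mu y) = mu (tmap al al y)"
    proof (rule lin_on_eq[where F="\<lambda>y. al (mu y)" and G="\<lambda>y. mu (tmap al al y)" and z=y and I="K \<times> K"])
      show "lin_on (K \<times> K) (\<lambda>y. al (mu y))"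
        by (rule lin_on_comp[OF is_lin_lin_on[OF mu] is_lin_fvs[OF mu] is_lin_lin_on[OF al]])
      show "lin_on (K \<times> K) (\<lambda>y. mu (tmap al al y))"
        by (rule lin_on_compI[OF is_lin_lin_on[OF mu] lin_tmap]) (rule tmap_fvs, simp_all add: alb)
      show "\<And>k. k \<in> K \<times> K \<Longrightarrow> al (mu (bv k)) = mu (tmap al al (bv k))"
        using mult by auto
    qed (rule y)
  qed
  show "\<forall>y\<in>fvs (K \<times> (K \<times> K)). mu (tmap al mu y) = mu (tmap mu al (assocl y))"
  proof
    fix y :: "'a \<times> ('a \<times> 'a) \<Rightarrow>\<^sub>0 'k" assume y: "y \<in> fvs (K \<times> (K \<times> K))"
    show "mu (tmap al mu y) = mu (tmap mu al (assocl y))"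
    proof (rule lin_on_eq[where F="\<lambda>y. mu (tmap al mu y)" and G="\<lambda>y. mu (tmap mu al (assocl y))" and z=y and I="K \<times> (K \<times> K)"])
      show "lin_on (K \<times> (K \<times> K)) (\<lambda>y. mu (tmap al mu y))"
        by (rule lin_on_compI[OF is_lin_lin_on[OF mu] lin_tmap]) (rule tmap_fvs, simp_all add: alb mub)
      show "lin_on (K \<times> (K \<times> K)) (\<lambda>y. mu (tmap mu al (assocl y)))"
        by (rule lin_on_compI[OF is_lin_lin_on[OF mu] lin_compI[OF lin_tmap lin_assocl]])
           (rule tmap_fvs[where I="K \<times> K" and J=K], auto simp: alb mub intro: assocl_fvs)
      show "\<And>k. k \<in> K \<times> (K \<times> K) \<Longrightarrow> mu (tmap al mu (bv k)) = mu (tmap mu al (assocl (bv k)))"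
        using ass by auto
    qed (rule y)
  qed
qed

lemma hom_assoc_intro:
  fixes mu :: "('a \<times> 'a \<Rightarrow>\<^sub>0 'k::field) \<Rightarrow> ('a \<Rightarrow>\<^sub>0 'k)"
  assumes mu: "is_lin (K \<times> K) K mu" and al: "is_lin K K al"
    and mult: "\<And>p q. p \<in> K \<Longrightarrow> q \<in> K \<Longrightarrow> al (mu (bv (p, q))) = mu (tensor (al (bv p)) (al (bv q)))"
    and ass: "\<And>p q r. p \<in> K \<Longrightarrow> q \<in> K \<Longrightarrow> r \<in> K \<Longrightarrow> mu (tensor (al (bv p)) (mu (bv (q, r)))) = mu (tensor (mu (bv (p, q))) (al (bv r)))"
  shows "hom_assoc K mu al"
proof -
  note M = ha_map(1)[OF mu al mult ass] and A = ha_map(2)[OF mu al mult ass]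
  note mul = is_lin_lin_on[OF mu] and all = is_lin_lin_on[OF al]
  have 1: "al (mu (tensor a a')) = mu (tensor (al a) (al a'))" if "a \<in> fvs K" "a' \<in> fvs K" for a a'
  proof -
    have "al (mu (tensor a a')) = mu (tmap al al (tensor a a'))" using M that by simp
    also have "\<dots> = mu (tensor (al a) (al a'))" using tmap_tensor[OF all all that] by simp
    finally show ?thesis .
  qed
  have 2: "mu (tensor (al a) (mu (tensor a' a''))) = mu (tensor (mu (tensor a a')) (al a''))"
    if "a \<in> fvs K" "a' \<in> fvs K" "a'' \<in> fvs K" for a a' a''
  proof -
    have t: "tensor a' a'' \<in> fvs (K \<times> K)" "tensor a a' \<in> fvs (K \<times> K)" using that by simp_all
    have "mu (tensor (al a) (mu (tensor a' a''))) = mu (tmap al mu (tensor a (tensor a' a'')))"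
      using tmap_tensor[OF all mul that(1) t(1)] by simp
    also have "\<dots> = mu (tmap mu al (assocl (tensor a (tensor a' a''))))" using A that by simp
    also have "\<dots> = mu (tmap mu al (tensor (tensor a a') a''))" by (simp add: assocl_tensor)
    also have "\<dots> = mu (tensor (mu (tensor a a')) (al a''))"
      using tmap_tensor[OF mul all t(2) that(3)] by simp
    finally show ?thesis .
  qed
  show ?thesis unfolding hom_assoc_def using mu al 1 2 by blast
qed

lemma hom_assoc_basis:
  assumes "hom_assoc K mu al"
  shows "\<And>p q. p \<in> K \<Longrightarrow> q \<in> K \<Longrightarrow> al (mu (bv (p, q))) = mu (tensor (al (bv p)) (al (bv q)))"
    and "\<And>p q r. p \<in> K \<Longrightarrow> q \<in> K \<Longrightarrow> r \<in> K \<Longrightarrow> mu (tensor (al (bv p)) (mu (bv (q, r)))) = mu (tensor (mu (bv (p, q))) (al (bv r)))"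
proof -
  fix p q assume "p \<in> K" "q \<in> K"
  then show "al (mu (bv (p, q))) = mu (tensor (al (bv p)) (al (bv q)))"
    using assms unfolding hom_assoc_def by (metis fvs_bv tensor_bv)
next
  fix p q r assume "p \<in> K" "q \<in> K" "r \<in> K"
  then show "mu (tensor (al (bv p)) (mu (bv (q, r)))) = mu (tensor (mu (bv (p, q))) (al (bv r)))"
    using assms unfolding hom_assoc_def by (metis fvs_bv tensor_bv)
qed



lemma lin_T12[simp]: "lin (T12 T)" unfolding T12_def comp_def by (rule lin_compI[OF lin_assocr lin_compI[OF lin_tmap lin_assocl]])
lemma lin_T23[simp]: "lin (T23 T)" unfolding T23_def by simp
lemma lin_tensor_mult[simp]: "lin (tensor_mult muA muB)" unfolding tensor_mult_def comp_def by (rule lin_compI[OF lin_tmap lin_mid_swap])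

lemma K2_cases:
  assumes "k \<in> (I \<times> J) \<times> (I' \<times> J')"
  obtains i j i' j' where "k = ((i, j), (i', j'))" "i \<in> I" "j \<in> J" "i' \<in> I'" "j' \<in> J'"
  using assms by (cases k; cases "fst k"; cases "snd k") auto

lemma K3_cases:
  assumes "k \<in> (I \<times> J) \<times> ((I' \<times> J') \<times> (I'' \<times> J''))"
  obtains i j i' j' i'' j'' where "k = ((i, j), ((i', j'), (i'', j'')))" "i \<in> I" "j \<in> J" "i' \<in> I'" "j' \<in> J'" "i'' \<in> I''" "j'' \<in> J''"
  using assms by (cases k; cases "fst k"; cases "snd k"; cases "fst (snd k)"; cases "snd (snd k)") auto

lemma tup3_cases:
  obtains i j i' j' i'' j'' where "k = ((i, j), ((i', j'), (i'', j'')))"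
  by (cases k; cases "fst k"; cases "snd k"; cases "fst (snd k)"; cases "snd (snd k)") auto

context twsetup begin

lemma al_is_lin: "is_lin (I \<times> J) (I \<times> J) (tmap alphaA alphaB)"
  by (rule is_lin_intro) (simp, rule tmap_fvs[where I=I and J=J], simp_all add: alphaA_bv alphaB_bv)

lemma mu_is_lin: "is_lin ((I \<times> J) \<times> (I \<times> J)) (I \<times> J) (tensor_mult muA muB)"
proof (rule is_lin_intro)
  fix x :: "(('i \<times> 'j) \<times> ('i \<times> 'j)) \<Rightarrow>\<^sub>0 'k" assume "x \<in> fvs ((I \<times> J) \<times> (I \<times> J))"
  then have "mid_swap x \<in> fvs ((I \<times> I) \<times> (J \<times> J))" by (rule mid_swap_fvs)
  then show "tensor_mult muA muB x \<in> fvs (I \<times> J)"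
    unfolding tensor_mult_def comp_def
    by (rule tmap_fvs[where I="I \<times> I" and J="J \<times> J", rotated 2]) (auto simp: muA_bv muB_bv)
qed simp

lemma T_bv_fvs0:
  assumes "k \<in> (I \<times> J) \<times> (I \<times> J)"
  shows "twist_T R (bv k) \<in> fvs ((I \<times> J) \<times> (I \<times> J))"
proof -
  obtain i j i' j' where k: "k = ((i, j), (i', j'))" "i \<in> I" "j \<in> J" "i' \<in> I" "j' \<in> J"
    using assms by (rule K2_cases)
  have "lext (\<lambda>(s, t). bv ((i, t), (s, j'))) (R (bv (j, i'))) \<in> fvs ((I \<times> J) \<times> (I \<times> J))"
  proof (rule lext_fvs)
    fix st assume "st \<in> Poly_Mapping.keys (R (bv (j, i')))"
    then have "fst st \<in> I \<and> snd st \<in> J" using R_keys k by blast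
    then show "(case st of (s, t) \<Rightarrow> bv ((i, t), (s, j'))) \<in> fvs ((I \<times> J) \<times> (I \<times> J))"
      using k by (auto simp: split_beta)
  qed
  then show ?thesis using k by (simp add: twist_T_bv)
qed

lemma T_fvs: assumes x: "x \<in> fvs ((I \<times> J) \<times> (I \<times> J))" shows "twist_T R x \<in> fvs ((I \<times> J) \<times> (I \<times> J))"
proof -
  have "twist_T R x = lext (\<lambda>k. twist_T R (bv k)) x" by (rule lin_repr) simp
  also have "\<dots> \<in> fvs ((I \<times> J) \<times> (I \<times> J))"
    using x by (intro lext_fvs T_bv_fvs0) (auto simp: fvs_def)
  finally show ?thesis .
qed

lemma T_is_lin: "is_lin ((I \<times> J) \<times> (I \<times> J)) ((I \<times> J) \<times> (I \<times> J)) (twist_T R)"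
  by (rule is_lin_intro) (simp_all add: T_fvs)

lemma T_bv_fvs: "k \<in> (I \<times> J) \<times> (I \<times> J) \<Longrightarrow> twist_T R (bv k) \<in> fvs ((I \<times> J) \<times> (I \<times> J))"
  by (rule T_fvs) simp

lemma T12_fvs: "x \<in> fvs ((I \<times> J) \<times> ((I \<times> J) \<times> (I \<times> J))) \<Longrightarrow> T12 (twist_T R) x \<in> fvs ((I \<times> J) \<times> ((I \<times> J) \<times> (I \<times> J)))"
  unfolding T12_def comp_def
  by (rule assocr_fvs, rule tmap_fvs[where I="(I \<times> J) \<times> (I \<times> J)" and J="I \<times> J"]) (auto simp: T_bv_fvs intro: assocl_fvs)

lemma T23_fvs: "x \<in> fvs ((I \<times> J) \<times> ((I \<times> J) \<times> (I \<times> J))) \<Longrightarrow> T23 (twist_T R) x \<in> fvs ((I \<times> J) \<times> ((I \<times> J) \<times> (I \<times> J)))"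
  unfolding T23_def
  by (rule tmap_fvs[where I="I \<times> J" and J="(I \<times> J) \<times> (I \<times> J)"]) (auto simp: T_bv_fvs)

lemma T13_fvs: assumes x: "x \<in> fvs ((I \<times> J) \<times> ((I \<times> J) \<times> (I \<times> J)))" shows "T13 (twist_T R) x \<in> fvs ((I \<times> J) \<times> ((I \<times> J) \<times> (I \<times> J)))"
  unfolding T13_def
proof (rule lext_fvs)
  fix k assume "k \<in> Poly_Mapping.keys x"
  with x have "k \<in> (I \<times> J) \<times> ((I \<times> J) \<times> (I \<times> J))" by (auto simp: fvs_def)
  then obtain p q r where k: "k = (p, (q, r))" "p \<in> I \<times> J" "q \<in> I \<times> J" "r \<in> I \<times> J" by auto
  have "lext (\<lambda>(s, u). bv (s, (q, u))) (twist_T R (bv (p, r))) \<in> fvs ((I \<times> J) \<times> ((I \<times> J) \<times> (I \<times> J)))"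
  proof (rule lext_fvs)
    fix su assume "su \<in> Poly_Mapping.keys (twist_T R (bv (p, r)))"
    moreover have "twist_T R (bv (p, r)) \<in> fvs ((I \<times> J) \<times> (I \<times> J))" using k by (intro T_bv_fvs) simp
    ultimately have "su \<in> (I \<times> J) \<times> (I \<times> J)" by (auto simp: fvs_def)
    then show "(case su of (s, u) \<Rightarrow> bv (s, (q, u))) \<in> fvs ((I \<times> J) \<times> ((I \<times> J) \<times> (I \<times> J)))"
      using k by (auto simp: split_beta)
  qed
  then show "(case k of (p, q, r) \<Rightarrow> lext (\<lambda>(s, u). bv (s, (q, u))) (twist_T R (bv (p, r)))) \<in> fvs ((I \<times> J) \<times> ((I \<times> J) \<times> (I \<times> J)))"
    using k by simp
qed

end


context twsetup begin

lemma cond2: "\<forall>x\<in>fvs ((I \<times> J) \<times> (I \<times> J)). tmap (tmap alphaA alphaB) (tmap alphaA alphaB) (twist_T R x) = twist_T R (tmap (tmap alphaA alphaB) (tmap alphaA alphaB) x)"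
proof
  fix x :: "(('i \<times> 'j) \<times> ('i \<times> 'j)) \<Rightarrow>\<^sub>0 'k" assume x: "x \<in> fvs ((I \<times> J) \<times> (I \<times> J))"
  show "tmap (tmap alphaA alphaB) (tmap alphaA alphaB) (twist_T R x) = twist_T R (tmap (tmap alphaA alphaB) (tmap alphaA alphaB) x)"
  proof (rule lin_on_eq[OF lin_lin_on lin_lin_on _ x])
    show "lin (\<lambda>x. tmap (tmap alphaA alphaB) (tmap alphaA alphaB) (twist_T R x))" by (rule lin_compI[OF lin_tmap lin_twist_T])
    show "lin (\<lambda>x. twist_T R (tmap (tmap alphaA alphaB) (tmap alphaA alphaB) x))" by (rule lin_compI[OF lin_twist_T lin_tmap])
    fix k assume "k \<in> (I \<times> J) \<times> (I \<times> J)"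
    then obtain i j i' j' where k: "k = ((i, j), (i', j'))" "i \<in> I" "j \<in> J" "i' \<in> I" "j' \<in> J" by (rule K2_cases)
    show "tmap (tmap alphaA alphaB) (tmap alphaA alphaB) (twist_T R (bv k)) = twist_T R (tmap (tmap alphaA alphaB) (tmap alphaA alphaB) (bv k))"
      using c2_bv[OF k(2,4,3,5)] k(1) by simp
  qed
qed

lemma cond3: "\<forall>x\<in>fvs ((I \<times> J) \<times> ((I \<times> J) \<times> (I \<times> J))). twist_T R (tmap (tmap alphaA alphaB) (tensor_mult muA muB) x) = tmap (tmap alphaA alphaB) (tensor_mult muA muB) (T13 (twist_T R) (T12 (twist_T R) x))"
proof
  fix x :: "(('i \<times> 'j) \<times> (('i \<times> 'j) \<times> ('i \<times> 'j))) \<Rightarrow>\<^sub>0 'k" assume x: "x \<in> fvs ((I \<times> J) \<times> ((I \<times> J) \<times> (I \<times> J)))"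
  show "twist_T R (tmap (tmap alphaA alphaB) (tensor_mult muA muB) x) = tmap (tmap alphaA alphaB) (tensor_mult muA muB) (T13 (twist_T R) (T12 (twist_T R) x))"
  proof (rule lin_on_eq[OF lin_lin_on lin_lin_on _ x])
    show "lin (\<lambda>x. twist_T R (tmap (tmap alphaA alphaB) (tensor_mult muA muB) x))" by (rule lin_compI[OF lin_twist_T lin_tmap])
    show "lin (\<lambda>x. tmap (tmap alphaA alphaB) (tensor_mult muA muB) (T13 (twist_T R) (T12 (twist_T R) x)))"
      by (rule lin_compI[OF lin_tmap lin_compI[OF lin_T13 lin_T12]])
    fix k assume "k \<in> (I \<times> J) \<times> ((I \<times> J) \<times> (I \<times> J))"
    then obtain i j i' j' i'' j'' where k: "k = ((i, j), ((i', j'), (i'', j'')))" "i \<in> I" "j \<in> J" "i' \<in> I" "j' \<in> J" "i'' \<in> I" "j'' \<in> J" by (rule K3_cases)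
    show "twist_T R (tmap (tmap alphaA alphaB) (tensor_mult muA muB) (bv k)) = tmap (tmap alphaA alphaB) (tensor_mult muA muB) (T13 (twist_T R) (T12 (twist_T R) (bv k)))"
      using c3_bv[OF k(2,4,6,3,5,7)] k(1) by simp
  qed
qed

lemma cond4: "\<forall>x\<in>fvs ((I \<times> J) \<times> ((I \<times> J) \<times> (I \<times> J))). twist_T R (tmap (tensor_mult muA muB) (tmap alphaA alphaB) (assocl x)) = tmap (tensor_mult muA muB) (tmap alphaA alphaB) (assocl (T13 (twist_T R) (T23 (twist_T R) x)))"
proof
  fix x :: "(('i \<times> 'j) \<times> (('i \<times> 'j) \<times> ('i \<times> 'j))) \<Rightarrow>\<^sub>0 'k" assume x: "x \<in> fvs ((I \<times> J) \<times> ((I \<times> J) \<times> (I \<times> J)))"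
  show "twist_T R (tmap (tensor_mult muA muB) (tmap alphaA alphaB) (assocl x)) = tmap (tensor_mult muA muB) (tmap alphaA alphaB) (assocl (T13 (twist_T R) (T23 (twist_T R) x)))"
  proof (rule lin_on_eq[OF lin_lin_on lin_lin_on _ x])
    show "lin (\<lambda>x. twist_T R (tmap (tensor_mult muA muB) (tmap alphaA alphaB) (assocl x)))" by (rule lin_compI[OF lin_twist_T lin_compI[OF lin_tmap lin_assocl]])
    show "lin (\<lambda>x. tmap (tensor_mult muA muB) (tmap alphaA alphaB) (assocl (T13 (twist_T R) (T23 (twist_T R) x))))"
      by (rule lin_compI[OF lin_tmap lin_compI[OF lin_assocl lin_compI[OF lin_T13 lin_T23]]])
    fix k assume "k \<in> (I \<times> J) \<times> ((I \<times> J) \<times> (I \<times> J))"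
    then obtain i j i' j' i'' j'' where k: "k = ((i, j), ((i', j'), (i'', j'')))" "i \<in> I" "j \<in> J" "i' \<in> I" "j' \<in> J" "i'' \<in> I" "j'' \<in> J" by (rule K3_cases)
    show "twist_T R (tmap (tensor_mult muA muB) (tmap alphaA alphaB) (assocl (bv k))) = tmap (tensor_mult muA muB) (tmap alphaA alphaB) (assocl (T13 (twist_T R) (T23 (twist_T R) (bv k))))"
      using c4_bv[OF k(2,4,6,3,5,7)] k(1) by simp
  qed
qed

lemma cond5: "T12 (twist_T R) (T23 (twist_T R) x) = T23 (twist_T R) (T12 (twist_T R) x)"
proof (rule lin_eq[where F="\<lambda>x. T12 (twist_T R) (T23 (twist_T R) x)" and G="\<lambda>x. T23 (twist_T R) (T12 (twist_T R) x)" and z=x])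
  show "lin (\<lambda>x. T12 (twist_T R) (T23 (twist_T R) x))" by (rule lin_compI[OF lin_T12 lin_T23])
  show "lin (\<lambda>x. T23 (twist_T R) (T12 (twist_T R) x))" by (rule lin_compI[OF lin_T23 lin_T12])
  fix k :: "('i \<times> 'j) \<times> (('i \<times> 'j) \<times> ('i \<times> 'j))"
  obtain i j i' j' i'' j'' where k: "k = ((i, j), ((i', j'), (i'', j'')))" by (rule tup3_cases)
  show "T12 (twist_T R) (T23 (twist_T R) (bv k)) = T23 (twist_T R) (T12 (twist_T R) (bv k))"
    using c5_bv k by simp
qed

lemma twistor: "hom_twistor (I \<times> J) (tensor_mult muA muB) (tmap alphaA alphaB) (twist_T R)"
  unfolding hom_twistor_def using T_is_lin cond2 cond3 cond4 cond5 by blast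

end


context twsetup begin

lemma tm_tensor:
  assumes "a \<in> fvs I" "a' \<in> fvs I" "b \<in> fvs J" "b' \<in> fvs J"
  shows "tensor_mult muA muB (tensor (tensor a b) (tensor a' b')) = tensor (muA (tensor a a')) (muB (tensor b b'))"
  unfolding tensor_mult_def comp_def mid_swap_tensor
  by (rule tmap_tensor[OF is_lin_lin_on[OF muA_lin] is_lin_lin_on[OF muB_lin]]) (simp_all add: assms)

lemma al_tensor:
  assumes "a \<in> fvs I" "b \<in> fvs J"
  shows "tmap alphaA alphaB (tensor a b) = tensor (alphaA a) (alphaB b)"
  by (rule tmap_tensor[OF is_lin_lin_on[OF alphaA_lin] is_lin_lin_on[OF alphaB_lin] assms])

lemma D_ha: "hom_assoc (I \<times> J) (tensor_mult muA muB) (tmap alphaA alphaB)"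
proof (rule hom_assoc_intro[OF mu_is_lin al_is_lin])
  fix p q assume "p \<in> I \<times> J" "q \<in> I \<times> J"
  then have "(p, q) \<in> (I \<times> J) \<times> (I \<times> J)" by simp
  then obtain i j i' j' where k: "(p, q) = ((i, j), (i', j'))" "i \<in> I" "j \<in> J" "i' \<in> I" "j' \<in> J" by (rule K2_cases)
  have e: "alphaA (muA (bv (i, i'))) = muA (tensor (alphaA (bv i)) (alphaA (bv i')))"
    using hom_assoc_basis(1)[OF HA] k by simp
  have f: "alphaB (muB (bv (j, j'))) = muB (tensor (alphaB (bv j)) (alphaB (bv j')))"
    using hom_assoc_basis(1)[OF HB] k by simp
  show "tmap alphaA alphaB (tensor_mult muA muB (bv (p, q))) = tensor_mult muA muB (tensor (tmap alphaA alphaB (bv p)) (tmap alphaA alphaB (bv q)))"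
    using k by (simp add: al_tensor tm_tensor muA_bv muB_bv alphaA_bv alphaB_bv e f)
next
  fix p q r assume "p \<in> I \<times> J" "q \<in> I \<times> J" "r \<in> I \<times> J"
  then have "(p, (q, r)) \<in> (I \<times> J) \<times> ((I \<times> J) \<times> (I \<times> J))" by simp
  then obtain i j i' j' i'' j'' where k: "(p, (q, r)) = ((i, j), ((i', j'), (i'', j'')))" "i \<in> I" "j \<in> J" "i' \<in> I" "j' \<in> J" "i'' \<in> I" "j'' \<in> J" by (rule K3_cases)
  have e: "muA (tensor (alphaA (bv i)) (muA (bv (i', i'')))) = muA (tensor (muA (bv (i, i'))) (alphaA (bv i'')))"
    using hom_assoc_basis(2)[OF HA] k by simp
  have f: "muB (tensor (alphaB (bv j)) (muB (bv (j', j'')))) = muB (tensor (muB (bv (j, j'))) (alphaB (bv j'')))"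
    using hom_assoc_basis(2)[OF HB] k by simp
  show "tensor_mult muA muB (tensor (tmap alphaA alphaB (bv p)) (tensor_mult muA muB (bv (q, r)))) =
        tensor_mult muA muB (tensor (tensor_mult muA muB (bv (p, q))) (tmap alphaA alphaB (bv r)))"
    using k by (simp add: tm_tensor muA_bv muB_bv alphaA_bv alphaB_bv e f)
qed

lemma DT_ha: "hom_assoc (I \<times> J) (tensor_mult muA muB \<circ> twist_T R) (tmap alphaA alphaB)"
proof -
  let ?mu = "tensor_mult muA muB" and ?al = "tmap alphaA alphaB" and ?T = "twist_T R"
  note M = ha_map(1)[OF mu_is_lin al_is_lin hom_assoc_basis[OF D_ha]]
  note A = ha_map(2)[OF mu_is_lin al_is_lin hom_assoc_basis[OF D_ha]]
  note mul = is_lin_lin_on[OF mu_is_lin] and all = is_lin_lin_on[OF al_is_lin]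
  have lin: "is_lin ((I \<times> J) \<times> (I \<times> J)) (I \<times> J) (?mu \<circ> ?T)"
  proof (rule is_lin_intro)
    show "lin (?mu \<circ> ?T)" unfolding comp_def by (rule lin_compI[OF lin_tensor_mult lin_twist_T])
    fix x :: "(('i \<times> 'j) \<times> ('i \<times> 'j)) \<Rightarrow>\<^sub>0 'k" assume "x \<in> fvs ((I \<times> J) \<times> (I \<times> J))"
    then show "(?mu \<circ> ?T) x \<in> fvs (I \<times> J)" by (simp add: is_lin_fvs[OF mu_is_lin] T_fvs)
  qed
  show ?thesis
  proof (rule hom_assoc_intro[OF lin al_is_lin])
    fix p q assume pq: "p \<in> I \<times> J" "q \<in> I \<times> J"
    have Tb: "?T (bv (p, q)) \<in> fvs ((I \<times> J) \<times> (I \<times> J))" using pq by (intro T_bv_fvs0) simp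
    have "?al ((?mu \<circ> ?T) (bv (p, q))) = ?al (?mu (?T (bv (p, q))))" by simp
    also have "\<dots> = ?mu (tmap ?al ?al (?T (bv (p, q))))" using M Tb by blast
    also have "\<dots> = ?mu (?T (tmap ?al ?al (bv (p, q))))" using cond2 pq by simp
    also have "\<dots> = (?mu \<circ> ?T) (tensor (?al (bv p)) (?al (bv q)))" by simp
    finally show "?al ((?mu \<circ> ?T) (bv (p, q))) = (?mu \<circ> ?T) (tensor (?al (bv p)) (?al (bv q)))" .
  next
    fix p q r assume pqr: "p \<in> I \<times> J" "q \<in> I \<times> J" "r \<in> I \<times> J"
    define x :: "(('i \<times> 'j) \<times> (('i \<times> 'j) \<times> ('i \<times> 'j))) \<Rightarrow>\<^sub>0 'k" where "x = bv (p, (q, r))"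
    have xf: "x \<in> fvs ((I \<times> J) \<times> ((I \<times> J) \<times> (I \<times> J)))" using pqr by (simp add: x_def)
    have Tqr: "?T (bv (q, r)) \<in> fvs ((I \<times> J) \<times> (I \<times> J))" using pqr by (intro T_bv_fvs0) simp
    have Tpq: "?T (bv (p, q)) \<in> fvs ((I \<times> J) \<times> (I \<times> J))" using pqr by (intro T_bv_fvs0) simp
    have L1: "tensor (?al (bv p)) (?mu (?T (bv (q, r)))) = tmap ?al ?mu (T23 ?T x)"
    proof -
      have "T23 ?T x = tensor (bv p) (?T (bv (q, r)))" by (simp add: T23_def x_def)
      moreover have "tmap ?al ?mu (tensor (bv p) (?T (bv (q, r)))) = tensor (?al (bv p)) (?mu (?T (bv (q, r))))"
        by (rule tmap_tensor[OF all mul _ Tqr]) (use pqr in simp)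
      ultimately show ?thesis by simp
    qed
    have R1: "tensor (?mu (?T (bv (p, q)))) (?al (bv r)) = tmap ?mu ?al (assocl (T12 ?T x))"
    proof -
      have "assocl (T12 ?T x) = tensor (?T (bv (p, q))) (bv r)" by (simp add: T12_def x_def)
      moreover have "tmap ?mu ?al (tensor (?T (bv (p, q))) (bv r)) = tensor (?mu (?T (bv (p, q)))) (?al (bv r))"
        by (rule tmap_tensor[OF mul all Tpq]) (use pqr in simp)
      ultimately show ?thesis by simp
    qed
    have y1f: "T23 ?T x \<in> fvs ((I \<times> J) \<times> ((I \<times> J) \<times> (I \<times> J)))" by (rule T23_fvs[OF xf])
    have zf: "T12 ?T x \<in> fvs ((I \<times> J) \<times> ((I \<times> J) \<times> (I \<times> J)))" by (rule T12_fvs[OF xf])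
    have "(?mu \<circ> ?T) (tensor (?al (bv p)) ((?mu \<circ> ?T) (bv (q, r)))) = ?mu (?T (tmap ?al ?mu (T23 ?T x)))"
      by (simp add: L1)
    also have "\<dots> = ?mu (tmap ?al ?mu (T13 ?T (T12 ?T (T23 ?T x))))" using cond3 y1f by simp
    also have "\<dots> = ?mu (tmap ?mu ?al (assocl (T13 ?T (T12 ?T (T23 ?T x)))))"
      using A T13_fvs[OF T12_fvs[OF y1f]] by blast
    also have "\<dots> = ?mu (tmap ?mu ?al (assocl (T13 ?T (T23 ?T (T12 ?T x)))))" by (simp only: cond5)
    also have "\<dots> = ?mu (?T (tmap ?mu ?al (assocl (T12 ?T x))))" using cond4 zf by simp
    also have "\<dots> = (?mu \<circ> ?T) (tensor ((?mu \<circ> ?T) (bv (p, q))) (?al (bv r)))"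
      by (simp add: R1)
    finally show "(?mu \<circ> ?T) (tensor (?al (bv p)) ((?mu \<circ> ?T) (bv (q, r)))) = (?mu \<circ> ?T) (tensor ((?mu \<circ> ?T) (bv (p, q))) (?al (bv r)))" .
  qed
qed

end

theorem proposition2p6:
  fixes I :: "'i set" and J :: "'j set"
    and muA :: "('i \<times> 'i \<Rightarrow>\<^sub>0 'k::field) \<Rightarrow> ('i \<Rightarrow>\<^sub>0 'k)" and alphaA :: "('i \<Rightarrow>\<^sub>0 'k) \<Rightarrow> ('i \<Rightarrow>\<^sub>0 'k)"
    and muB :: "('j \<times> 'j \<Rightarrow>\<^sub>0 'k) \<Rightarrow> ('j \<Rightarrow>\<^sub>0 'k)" and alphaB :: "('j \<Rightarrow>\<^sub>0 'k) \<Rightarrow> ('j \<Rightarrow>\<^sub>0 'k)"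
    and R :: "('j \<times> 'i \<Rightarrow>\<^sub>0 'k) \<Rightarrow> ('i \<times> 'j \<Rightarrow>\<^sub>0 'k)"
  assumes "hom_assoc I muA alphaA"
    and "hom_assoc J muB alphaB"
    and "hom_twisting I J muA alphaA muB alphaB R"
  shows "hom_twistor (I \<times> J) (tensor_mult muA muB) (tmap alphaA alphaB) (twist_T R)
    \<and> hom_assoc (I \<times> J) (tensor_mult muA muB \<circ> twist_T R) (tmap alphaA alphaB)"
proof -
  interpret twsetup I J muA alphaA muB alphaB R using assms by (unfold_locales)
  show ?thesis using twistor DT_ha by blast
qed


end
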